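(* Let $\varphi(z)=-1/\overline{z}$ and let $f:\mathbb{C}_\infty\to\mathbb{C}_\infty$ be a rational map of degree at least $2$ with $f\circ\varphi=\varphi\circ f$. If $\Omega$ is a forward invariant component of the Fatou set $F(f)$ (i.e. $f(\Omega)=\Omega$), then $W=\varphi(\Omega)$ is also a forward invariant component of $F(f)$, and $W$ is of the same type as $\Omega$ (attracting, super-attracting, parabolic, Siegel disk, or Herman ring).
   Context: The Fatou set $F(f)$ is the maximal open set on which $\{f^n\}$ is normal. A forward invariant Fatou component $\Omega$ is: an attracting component if it contains an attracting fixed point $\zeta$ ($0<|f'(\zeta)|<1$); a super-attracting component if it contains a fixed point with $f'(\zeta)=0$; a parabolic component if there is a fixed point $\zeta\in\partial\Omega$ with $f'(\zeta)$ a root of unity and $f^n\to\zeta$ on $\Omega$; a Siegel disk if $f|_\Omega$ is analytically conjugate to an irrational Euclidean rotation of the unit disk; a Herman ring if $f|_\Omega$ is analytically conjugate to an irrational Euclidean rotation of some round annulus. (Multipliers at $\infty$ are defined via conjugation by $1/z$.) Every forward invariant Fatou component of a rational map of degree $\ge2$ is of exactly one of these types. *)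

theory Defs
  imports "HOL-Analysis.Analysis" "HOL-Computational_Algebra.Polynomial"
begin

text \<open>The Riemann sphere is modelled as complex option, None being the point at infinity.\<close>

type_synonym csphere = "complex option"

fun sdist :: "csphere \<Rightarrow> csphere \<Rightarrow> real" where
  "sdist (Some z) (Some w) = 2 * cmod (z - w) / (sqrt (1 + (cmod z)\<^sup>2) * sqrt (1 + (cmod w)\<^sup>2))"
| "sdist (Some z) None = 2 / sqrt (1 + (cmod z)\<^sup>2)"
| "sdist None (Some w) = 2 / sqrt (1 + (cmod w)\<^sup>2)"
| "sdist None None = 0"

definition sopen :: "csphere set \<Rightarrow> bool" where
  "sopen U \<longleftrightarrow> (\<forall>x\<in>U. \<exists>e>0. {y. sdist x y < e} \<subseteq> U)"

lemma istopology_sopen: "istopology sopen"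
  unfolding istopology_def
proof (intro conjI allI impI)
  fix S T assume S: "sopen S" and T: "sopen T"
  show "sopen (S \<inter> T)"
    unfolding sopen_def
  proof
    fix x assume x: "x \<in> S \<inter> T"
    obtain e1 where e1: "e1 > 0" "{y. sdist x y < e1} \<subseteq> S"
      using S x unfolding sopen_def by blast
    obtain e2 where e2: "e2 > 0" "{y. sdist x y < e2} \<subseteq> T"
      using T x unfolding sopen_def by blast
    have "{y. sdist x y < min e1 e2} \<subseteq> S \<inter> T" using e1(2) e2(2) by auto
    moreover have "min e1 e2 > 0" using e1(1) e2(1) by simp
    ultimately show "\<exists>e>0. {y. sdist x y < e} \<subseteq> S \<inter> T" by blast
  qed
next
  fix K assume K: "\<forall>S\<in>K. sopen S"
  show "sopen (\<Union>K)"
    unfolding sopen_def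
  proof
    fix x assume "x \<in> \<Union>K"
    then obtain S where S: "S \<in> K" "x \<in> S" by blast
    then obtain e where "e > 0" "{y. sdist x y < e} \<subseteq> S"
      using K unfolding sopen_def by blast
    then show "\<exists>e>0. {y. sdist x y < e} \<subseteq> \<Union>K" using S(1) by blast
  qed
qed

definition sphere_top :: "csphere topology" where
  "sphere_top = topology sopen"

definition rat_eval :: "complex poly \<Rightarrow> complex poly \<Rightarrow> csphere \<Rightarrow> csphere" where
  "rat_eval p q x = (case x of
      Some z \<Rightarrow> (if poly q z = 0 then None else Some (poly p z / poly q z))
    | None \<Rightarrow> (if degree p > degree q then None else Some (coeff p (degree q) / lead_coeff q)))"

definition rational_map :: "(csphere \<Rightarrow> csphere) \<Rightarrow> nat \<Rightarrow> bool" where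
  "rational_map f d \<longleftrightarrow> (\<exists>p q. q \<noteq> 0 \<and> coprime p q \<and> max (degree p) (degree q) = d
                                 \<and> f = rat_eval p q)"

definition normal_iterates :: "(csphere \<Rightarrow> csphere) \<Rightarrow> csphere set \<Rightarrow> bool" where
  "normal_iterates f U \<longleftrightarrow>
     (\<forall>n :: nat \<Rightarrow> nat. \<exists>r g. strict_mono r \<and>
        (\<forall>x\<in>U. \<exists>V. sopen V \<and> x \<in> V \<and> V \<subseteq> U \<and>
           (\<forall>\<epsilon>>0. \<forall>\<^sub>F k in sequentially. \<forall>y\<in>V. sdist ((f ^^ n (r k)) y) (g y) < \<epsilon>)))"

definition fatou :: "(csphere \<Rightarrow> csphere) \<Rightarrow> csphere set" where
  "fatou f = \<Union>{U. sopen U \<and> normal_iterates f U}"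

definition fatou_components :: "(csphere \<Rightarrow> csphere) \<Rightarrow> csphere set set" where
  "fatou_components f = connected_components_of (subtopology sphere_top (fatou f))"

text \<open>Finite part (value at infinity irrelevant) and the chart change z \<mapsto> 1/z.\<close>
fun fin :: "csphere \<Rightarrow> complex" where
  "fin (Some z) = z" | "fin None = 0"

fun inv_s :: "csphere \<Rightarrow> csphere" where
  "inv_s None = Some 0"
| "inv_s (Some z) = (if z = 0 then None else Some (1 / z))"

definition multiplier :: "(csphere \<Rightarrow> csphere) \<Rightarrow> csphere \<Rightarrow> complex" where
  "multiplier f \<zeta> = (case \<zeta> of
      Some z \<Rightarrow> deriv (\<lambda>w. fin (f (Some w))) z
    | None \<Rightarrow> deriv (\<lambda>w. fin (inv_s (f (inv_s (Some w))))) 0)"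

definition sphere_holomorphic_on :: "(csphere \<Rightarrow> complex) \<Rightarrow> csphere set \<Rightarrow> bool" where
  "sphere_holomorphic_on h U \<longleftrightarrow>
     (\<lambda>z. h (Some z)) holomorphic_on {z. Some z \<in> U} \<and>
     (None \<in> U \<longrightarrow> (\<lambda>w. h (inv_s (Some w))) holomorphic_on {w. inv_s (Some w) \<in> U})"

definition irrational_rotation :: "real \<Rightarrow> bool" where
  "irrational_rotation \<theta> \<longleftrightarrow> \<theta> \<notin> \<rat>"

definition attracting_comp where
  "attracting_comp f \<Omega> \<longleftrightarrow> (\<exists>\<zeta>\<in>\<Omega>. f \<zeta> = \<zeta> \<and> 0 < cmod (multiplier f \<zeta>) \<and> cmod (multiplier f \<zeta>) < 1)"

definition superattracting_comp where
  "superattracting_comp f \<Omega> \<longleftrightarrow> (\<exists>\<zeta>\<in>\<Omega>. f \<zeta> = \<zeta> \<and> multiplier f \<zeta> = 0)"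

definition parabolic_comp where
  "parabolic_comp f \<Omega> \<longleftrightarrow> (\<exists>\<zeta>. \<zeta> \<in> sphere_top closure_of \<Omega> - \<Omega> \<and> f \<zeta> = \<zeta> \<and>
      (\<exists>m::nat. m \<ge> 1 \<and> (multiplier f \<zeta>) ^ m = 1) \<and>
      (\<forall>z\<in>\<Omega>. (\<lambda>n. sdist ((f ^^ n) z) \<zeta>) \<longlonglongrightarrow> 0))"

definition siegel_disk where
  "siegel_disk f \<Omega> \<longleftrightarrow> (\<exists>h \<theta>. irrational_rotation \<theta> \<and> sphere_holomorphic_on h \<Omega> \<and>
      bij_betw h \<Omega> (ball 0 1) \<and>
      (\<forall>z\<in>\<Omega>. h (f z) = exp (2 * pi * \<i> * complex_of_real \<theta>) * h z))"

definition herman_ring where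
  "herman_ring f \<Omega> \<longleftrightarrow> (\<exists>h \<theta> r R. 0 < r \<and> r < R \<and> irrational_rotation \<theta> \<and>
      sphere_holomorphic_on h \<Omega> \<and> bij_betw h \<Omega> {w. r < cmod w \<and> cmod w < R} \<and>
      (\<forall>z\<in>\<Omega>. h (f z) = exp (2 * pi * \<i> * complex_of_real \<theta>) * h z))"

datatype comp_type = Attracting | SuperAttracting | Parabolic | SiegelDisk | HermanRing

fun has_type :: "(csphere \<Rightarrow> csphere) \<Rightarrow> csphere set \<Rightarrow> comp_type \<Rightarrow> bool" where
  "has_type f \<Omega> Attracting = attracting_comp f \<Omega>"
| "has_type f \<Omega> SuperAttracting = superattracting_comp f \<Omega>"
| "has_type f \<Omega> Parabolic = parabolic_comp f \<Omega>"
| "has_type f \<Omega> SiegelDisk = siegel_disk f \<Omega>"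
| "has_type f \<Omega> HermanRing = herman_ring f \<Omega>"

fun phi :: "csphere \<Rightarrow> csphere" where
  "phi None = Some 0"
| "phi (Some z) = (if z = 0 then None else Some (- 1 / cnj z))"

end

theory Submission
  imports Defs
begin

lemma phi_phi[simp]: "phi (phi x) = x"
  by (cases x) auto

lemma sq1: "sqrt (1 + (cmod z)\<^sup>2) > 0" by (simp add: add_pos_nonneg)

lemma sqrt_inv: "z \<noteq> 0 \<Longrightarrow> sqrt (1 + (cmod (-1 / cnj z))\<^sup>2) = sqrt (1 + (cmod z)\<^sup>2) / cmod z"
proof -
  assume z: "z \<noteq> 0"
  have "1 + (cmod (-1 / cnj z))\<^sup>2 = (1 + (cmod z)\<^sup>2) / (cmod z)\<^sup>2"
    using z by (simp add: norm_divide power_divide field_simps)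
  thus ?thesis by (simp add: real_sqrt_divide)
qed

lemma sdist_phi[simp]: "sdist (phi x) (phi y) = sdist x y"
proof (cases x)
  case None
  then show ?thesis
  proof (cases y)
    case (Some w) then show ?thesis using None
      by (cases "w = 0") (auto simp: sqrt_inv norm_divide real_sqrt_divide field_simps)
  qed simp
next
  case (Some z)
  then show ?thesis
  proof (cases y)
    case None then show ?thesis using Some
      by (cases "z = 0") (auto simp: sqrt_inv norm_divide real_sqrt_divide field_simps)
  next
    case (Some w)
    note zz = \<open>x = Some z\<close>
    show ?thesis
    proof (cases "z = 0")
      case True then show ?thesis using Some zz
        by (cases "w = 0") (auto simp: sqrt_inv norm_divide real_sqrt_divide field_simps)
    next
      case False
      show ?thesis
      proof (cases "w = 0")
        case True then show ?thesis using Some zz False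
          by (auto simp: sqrt_inv norm_divide real_sqrt_divide field_simps)
      next
        case wn: False
        have "-1 / cnj z - -1 / cnj w = cnj ((z - w) / (z * w))"
          using False wn by (simp add: field_simps)
        hence e: "cmod (-1 / cnj z - -1 / cnj w) = cmod (z - w) / (cmod z * cmod w)"
          by (simp only: complex_mod_cnj norm_divide norm_mult)
        show ?thesis using Some zz False wn
        proof -
          have px: "phi x = Some (-1 / cnj z)" "phi y = Some (-1 / cnj w)" using Some zz False wn by auto
          have "sdist (phi x) (phi y) = 2 * cmod (-1 / cnj z - -1 / cnj w) / (sqrt (1 + (cmod (-1 / cnj z))\<^sup>2) * sqrt (1 + (cmod (-1 / cnj w))\<^sup>2))"
            unfolding px by simp
          also have "\<dots> = 2 * (cmod (z - w) / (cmod z * cmod w)) / ((sqrt (1 + (cmod z)\<^sup>2) / cmod z) * (sqrt (1 + (cmod w)\<^sup>2) / cmod w))"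
            by (simp only: e sqrt_inv[OF False] sqrt_inv[OF wn])
          also have "\<dots> = sdist x y" unfolding zz Some using False wn sq1[of z] sq1[of w] by (simp add: field_simps)
          finally show ?thesis .
        qed
      qed
    qed
  qed
qed

lemma phi_image_eq: "phi ` U = phi -` U"
  by (auto simp: image_iff) (metis phi_phi)

lemma inj_phi: "inj phi" by (metis injI phi_phi)

lemma sopen_phi: "sopen U \<Longrightarrow> sopen (phi ` U)"
  unfolding sopen_def
proof
  fix x assume U: "\<forall>x\<in>U. \<exists>e>0. {y. sdist x y < e} \<subseteq> U" and x: "x \<in> phi ` U"
  then obtain x0 where x0: "x0 \<in> U" "x = phi x0" by auto
  then obtain e where e: "e > 0" "{y. sdist x0 y < e} \<subseteq> U" using U by blast
  have "{y. sdist x y < e} \<subseteq> phi ` U"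
  proof
    fix y assume "y \<in> {y. sdist x y < e}"
    hence "sdist x0 (phi y) < e" using x0 sdist_phi[of x0 "phi y"] by simp
    hence "phi y \<in> U" using e by blast
    thus "y \<in> phi ` U" by (metis image_eqI phi_phi)
  qed
  thus "\<exists>e>0. {y. sdist x y < e} \<subseteq> phi ` U" using e by blast
qed

lemma openin_sphere: "openin sphere_top = sopen"
  unfolding sphere_top_def using istopology_sopen by simp

lemma sopen_UNIV: "sopen UNIV" by (auto simp: sopen_def intro: exI[of _ 1])

lemma topspace_sphere[simp]: "topspace sphere_top = UNIV"
  unfolding topspace_def openin_sphere using sopen_UNIV by blast

lemma homeo_phi: "homeomorphic_map sphere_top sphere_top phi"
proof (rule homeomorphic_map_involution)
  show "continuous_map sphere_top sphere_top phi"
    unfolding continuous_map_def openin_sphere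
    by (auto simp: phi_image_eq[symmetric] sopen_phi vimage_def[symmetric])
qed simp

lemma iter_phi: "f \<circ> phi = phi \<circ> f \<Longrightarrow> (f ^^ n) (phi x) = phi ((f ^^ n) x)"
  by (induction n) (auto simp: fun_eq_iff)

lemma normal_phi:
  assumes c: "f \<circ> phi = phi \<circ> f" and N: "normal_iterates f U"
  shows "normal_iterates f (phi ` U)"
  unfolding normal_iterates_def
proof
  fix n :: "nat \<Rightarrow> nat"
  obtain r g where r: "strict_mono r" and
    G: "\<forall>x\<in>U. \<exists>V. sopen V \<and> x \<in> V \<and> V \<subseteq> U \<and>
           (\<forall>\<epsilon>>0. \<forall>\<^sub>F k in sequentially. \<forall>y\<in>V. sdist ((f ^^ n (r k)) y) (g y) < \<epsilon>)"
    using N unfolding normal_iterates_def by blast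
  have "\<forall>x\<in>phi ` U. \<exists>V. sopen V \<and> x \<in> V \<and> V \<subseteq> phi ` U \<and>
           (\<forall>\<epsilon>>0. \<forall>\<^sub>F k in sequentially. \<forall>y\<in>V. sdist ((f ^^ n (r k)) y) ((phi \<circ> g \<circ> phi) y) < \<epsilon>)"
  proof
    fix x assume "x \<in> phi ` U"
    then obtain x0 where x0: "x0 \<in> U" "x = phi x0" by auto
    then obtain V where V: "sopen V" "x0 \<in> V" "V \<subseteq> U"
      "\<forall>\<epsilon>>0. \<forall>\<^sub>F k in sequentially. \<forall>y\<in>V. sdist ((f ^^ n (r k)) y) (g y) < \<epsilon>"
      using G by blast
    have "\<forall>\<epsilon>>0. \<forall>\<^sub>F k in sequentially. \<forall>y\<in>phi ` V. sdist ((f ^^ n (r k)) y) ((phi \<circ> g \<circ> phi) y) < \<epsilon>"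
    proof (intro allI impI)
      fix e :: real assume "e > 0"
      hence ev: "\<forall>\<^sub>F k in sequentially. \<forall>y\<in>V. sdist ((f ^^ n (r k)) y) (g y) < e" using V by blast
      show "\<forall>\<^sub>F k in sequentially. \<forall>y\<in>phi ` V. sdist ((f ^^ n (r k)) y) ((phi \<circ> g \<circ> phi) y) < e"
        by (rule eventually_mono[OF ev]) (auto simp: iter_phi[OF c])
    qed
    thus "\<exists>V. sopen V \<and> x \<in> V \<and> V \<subseteq> phi ` U \<and>
           (\<forall>\<epsilon>>0. \<forall>\<^sub>F k in sequentially. \<forall>y\<in>V. sdist ((f ^^ n (r k)) y) ((phi \<circ> g \<circ> phi) y) < \<epsilon>)"
      using V x0 by (intro exI[of _ "phi ` V"]) (auto simp: sopen_phi)
  qed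
  thus "\<exists>r g. strict_mono r \<and> (\<forall>x\<in>phi ` U. \<exists>V. sopen V \<and> x \<in> V \<and> V \<subseteq> phi ` U \<and>
           (\<forall>\<epsilon>>0. \<forall>\<^sub>F k in sequentially. \<forall>y\<in>V. sdist ((f ^^ n (r k)) y) (g y) < \<epsilon>))"
    using r by blast
qed

lemma fatou_phi:
  assumes c: "f \<circ> phi = phi \<circ> f"
  shows "phi ` fatou f = fatou f"
proof -
  have sub: "phi ` fatou f \<subseteq> fatou f"
    unfolding fatou_def using sopen_phi normal_phi[OF c] by blast
  have "fatou f \<subseteq> phi ` fatou f"
    proof
    fix x assume "x \<in> fatou f"
    hence "phi x \<in> fatou f" using sub by blast
    thus "x \<in> phi ` fatou f" by (metis image_eqI phi_phi)
  qed
  thus ?thesis using sub by blast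
qed

lemma components_phi:
  assumes c: "f \<circ> phi = phi \<circ> f" and O: "\<Omega> \<in> fatou_components f"
  shows "phi ` \<Omega> \<in> fatou_components f"
proof -
  have h: "homeomorphic_map (subtopology sphere_top (fatou f)) (subtopology sphere_top (fatou f)) phi"
    by (rule homeomorphic_map_subtopologies[OF homeo_phi]) (simp add: fatou_phi[OF c])
  show ?thesis using homeomorphic_map_connected_components_of[OF h] O
    unfolding fatou_components_def by blast
qed

lemma ev_compose:
  fixes g :: "complex \<Rightarrow> complex"
  assumes c: "isCont g a" and e: "eventually P (nhds (g a))"
  shows "eventually (\<lambda>x. P (g x)) (nhds a)"
proof -
  have "P (g a)" using e by (simp add: eventually_nhds_conv_at)
  moreover have "eventually (\<lambda>x. P (g x)) (at a)"
  proof -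
    have "\<forall>P. eventually P (nhds (g a)) \<longrightarrow> (\<forall>\<^sub>F x in at a. P (g x))"
      using c unfolding isCont_def filterlim_iff .
    thus ?thesis using e by auto
  qed
  ultimately show ?thesis by (simp add: eventually_nhds_conv_at)
qed

lemma ev_ne: "(y::complex) \<noteq> 0 \<Longrightarrow> eventually (\<lambda>v. v \<noteq> 0) (nhds y)"
  using eventually_nhds_in_open[of "-{0}" y] by auto

lemma loc_rat:
  assumes fq: "f = rat_eval p q" and qz: "poly q z \<noteq> 0"
  shows "eventually (\<lambda>w. f (Some w) = Some (poly p w / poly q w)) (nhds z)"
proof -
  have "isCont (poly q) z" by simp
  hence "eventually (\<lambda>w. poly q w \<noteq> 0) (nhds z)"
    using ev_compose[where g="poly q" and a=z and P="\<lambda>v. v \<noteq> 0"] ev_ne[OF qz] by simp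
  thus ?thesis by (rule eventually_mono) (simp add: fq rat_eval_def)
qed

lemma F_deriv:
  assumes fq: "f = rat_eval p q" and fz: "f (Some z) = Some z"
  shows "\<exists>D. ((\<lambda>w. fin (f (Some w))) has_field_derivative D) (at z)"
    and "eventually (\<lambda>w. f (Some w) = Some (fin (f (Some w)))) (nhds z)"
proof -
  have qz: "poly q z \<noteq> 0" using fz by (auto simp: fq rat_eval_def split: if_splits)
  have ev: "eventually (\<lambda>w. f (Some w) = Some (poly p w / poly q w)) (nhds z)"
    by (rule loc_rat[OF fq qz])
  have d: "((\<lambda>w. poly p w / poly q w) has_field_derivative
      (poly (pderiv p) z * poly q z - poly p z * poly (pderiv q) z) / (poly q z * poly q z)) (at z)"
    by (rule DERIV_divide[OF poly_DERIV poly_DERIV qz])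
  have e2: "eventually (\<lambda>w. fin (f (Some w)) = poly p w / poly q w) (nhds z)"
    by (rule eventually_mono[OF ev]) simp
  show "\<exists>D. ((\<lambda>w. fin (f (Some w))) has_field_derivative D) (at z)"
    using DERIV_cong_ev[OF refl e2 refl] d by blast
  show "eventually (\<lambda>w. f (Some w) = Some (fin (f (Some w)))) (nhds z)"
    by (rule eventually_mono[OF ev]) simp
qed

lemma mult_generic:
  assumes c: "f \<circ> phi = phi \<circ> f" and fq: "f = rat_eval p q" and fz: "f (Some z) = Some z"
    and z0: "z \<noteq> 0"
  shows "multiplier f (Some (-1 / cnj z)) = cnj (multiplier f (Some z))"
proof -
  define F where "F w = fin (f (Some w))" for w
  obtain D where D: "(F has_field_derivative D) (at z)"
    using F_deriv(1)[OF fq fz] unfolding F_def by blast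
  have ev0: "eventually (\<lambda>u. f (Some u) = Some (F u)) (nhds z)"
    using F_deriv(2)[OF fq fz] unfolding F_def .
  have FF: "F = (\<lambda>w. fin (f (Some w)))" by (simp add: fun_eq_iff F_def)
  have Fz: "F z = z" using fz by (simp add: F_def)
  have "isCont F z" using DERIV_continuous[OF D] by simp
  hence ev1: "eventually (\<lambda>u. F u \<noteq> 0) (nhds z)"
    using ev_compose[where g=F and a=z and P="\<lambda>v. v \<noteq> 0"] ev_ne[of "F z"] Fz z0 by simp
  define k where "k w = -1 / cnj w" for w
  define z' where "z' = -1 / cnj z"
  have z'0: "z' \<noteq> 0" using z0 by (simp add: z'_def)
  have kz': "k z' = z" using z0 by (simp add: k_def z'_def)
  have kc: "isCont k z'" unfolding k_def using z'0 by (auto intro!: continuous_intros)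
  have ev2: "eventually (\<lambda>w. f (Some (k w)) = Some (F (k w)) \<and> F (k w) \<noteq> 0) (nhds z')"
    using ev_compose[OF kc, where P="\<lambda>u. f (Some u) = Some (F u) \<and> F u \<noteq> 0"] eventually_conj[OF ev0 ev1]
    by (simp add: kz')
  have ev3: "eventually (\<lambda>w. w \<noteq> 0) (nhds z')" by (rule ev_ne[OF z'0])
  have ev4: "eventually (\<lambda>w. fin (f (Some w)) = (cnj \<circ> (\<lambda>v. -1 / F v) \<circ> cnj) (-1 / w)) (nhds z')"
  proof (rule eventually_mono[OF eventually_conj[OF ev2 ev3]])
    fix w assume a: "(f (Some (k w)) = Some (F (k w)) \<and> F (k w) \<noteq> 0) \<and> w \<noteq> 0"
    have kw0: "k w \<noteq> 0" using a by (simp add: k_def)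
    have "Some w = phi (Some (k w))" using a kw0 by (simp add: k_def)
    hence "f (Some w) = phi (f (Some (k w)))" using c by (metis comp_apply)
    also have "\<dots> = Some (-1 / cnj (F (k w)))" using a by simp
    finally show "fin (f (Some w)) = (cnj \<circ> (\<lambda>v. -1 / F v) \<circ> cnj) (-1 / w)"
      by (simp add: k_def)
  qed
  have "((\<lambda>v. inverse (F v)) has_field_derivative - (D * inverse (F z ^ Suc (Suc 0)))) (at z)"
    by (rule DERIV_inverse_fun[OF D]) (simp add: Fz z0)
  hence "((\<lambda>v. - inverse (F v)) has_field_derivative - (- (D * inverse (F z ^ Suc (Suc 0))))) (at z)"
    by (rule DERIV_minus)
  moreover have "(\<lambda>v. - inverse (F v)) = (\<lambda>v. -1 / F v)" by (simp add: fun_eq_iff divide_inverse)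
  moreover have "- (- (D * inverse (F z ^ Suc (Suc 0)))) = D / (z * z)" by (simp add: Fz field_simps)
  ultimately have d1: "((\<lambda>v. -1 / F v) has_field_derivative D / (z * z)) (at z)" by metis
  have d2: "((cnj \<circ> (\<lambda>v. -1 / F v) \<circ> cnj) has_field_derivative cnj (D / (z * z))) (at (cnj z))"
    using has_field_derivative_cnj_cnj[of "\<lambda>v. -1 / F v" "D / (z * z)" "cnj z", unfolded complex_cnj_cnj] d1
    by blast
  have d3: "((\<lambda>w. -1 / w) has_field_derivative 1 / (z' * z')) (at z')"
    using z'0 by (auto intro!: derivative_eq_intros simp: field_simps)
  have e: "-1 / z' = cnj z" using z0 by (simp add: z'_def)
  have d4: "((cnj \<circ> (\<lambda>v. -1 / F v) \<circ> cnj) \<circ> (\<lambda>w. -1 / w) has_field_derivative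
       cnj (D / (z * z)) * (1 / (z' * z'))) (at z')"
    using DERIV_chain[where g="\<lambda>w. -1 / w", OF d2[folded e] d3] .
  have "cnj (D / (z * z)) * (1 / (z' * z')) = cnj D"
    using z0 by (simp add: z'_def field_simps)
  hence d5: "((\<lambda>w. fin (f (Some w))) has_field_derivative cnj D) (at z')"
    using d4 DERIV_cong_ev[OF refl ev4 refl] by (simp add: o_def)
  show ?thesis
    unfolding multiplier_def z'_def[symmetric]
    using DERIV_imp_deriv[OF d5] DERIV_imp_deriv[OF D] FF by simp
qed

lemma mult_zero:
  assumes c: "f \<circ> phi = phi \<circ> f" and fq: "f = rat_eval p q" and fN: "f None = None"
  shows "multiplier f None = cnj (multiplier f (Some 0))"
proof -
  have f0: "f (Some 0) = Some 0"
    using c fN by (metis comp_apply phi.simps(1))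
  define F where "F w = fin (f (Some w))" for w
  have FF: "F = (\<lambda>w. fin (f (Some w)))" by (simp add: fun_eq_iff F_def)
  obtain D where D: "(F has_field_derivative D) (at 0)"
    using F_deriv(1)[OF fq f0] unfolding F_def by blast
  have ev0: "eventually (\<lambda>u. f (Some u) = Some (F u)) (nhds 0)"
    using F_deriv(2)[OF fq f0] unfolding F_def .
  define k where "k u = - cnj u" for u :: complex
  have kc: "isCont k 0" unfolding k_def by (auto intro!: continuous_intros)
  have k0: "k 0 = 0" by (simp add: k_def)
  have ev1: "eventually (\<lambda>u. f (Some (k u)) = Some (F (k u))) (nhds 0)"
    using ev_compose[OF kc, where P="\<lambda>u. f (Some u) = Some (F u)"] ev0 by (simp add: k0)
  have ev2: "eventually (\<lambda>u. fin (inv_s (f (inv_s (Some u)))) = (cnj \<circ> (\<lambda>v. - F (- v)) \<circ> cnj) u) (nhds 0)"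
  proof (rule eventually_mono[OF ev1])
    fix u assume a: "f (Some (k u)) = Some (F (k u))"
    show "fin (inv_s (f (inv_s (Some u)))) = (cnj \<circ> (\<lambda>v. - F (- v)) \<circ> cnj) u"
    proof (cases "u = 0")
      case True
      then show ?thesis using fN f0 by (simp add: F_def)
    next
      case False
      have "inv_s (Some u) = phi (Some (k u))" using False by (simp add: k_def)
      hence "f (inv_s (Some u)) = phi (f (Some (k u)))" using c by (metis comp_apply)
      also have "\<dots> = phi (Some (F (k u)))" using a by simp
      finally have e: "f (inv_s (Some u)) = phi (Some (F (k u)))" .
      have e2: "f (Some (1 / u)) = phi (Some (F (- cnj u)))" using e False by (simp add: k_def)
      show ?thesis
        by (cases "F (- cnj u) = 0") (simp_all add: e2 False)
    qed
  qed
  have um: "((\<lambda>v. - v) has_field_derivative -1) (at (0::complex))"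
    by (auto intro!: derivative_eq_intros)
  have "((F \<circ> (\<lambda>v. - v)) has_field_derivative D * -1) (at 0)"
    using DERIV_chain[where g="\<lambda>v. - v" and x=0 and f=F, OF _ um] D by simp
  hence "((\<lambda>v. - (F \<circ> (\<lambda>v. - v)) v) has_field_derivative - (D * -1)) (at 0)"
    by (rule DERIV_minus)
  hence d1: "((\<lambda>v. - F (- v)) has_field_derivative D) (at 0)" by (simp add: o_def)
  have d2: "((cnj \<circ> (\<lambda>v. - F (- v)) \<circ> cnj) has_field_derivative cnj D) (at 0)"
    using has_field_derivative_cnj_cnj[of "\<lambda>v. - F (- v)" D 0] d1 by simp
  have d3: "((\<lambda>u. fin (inv_s (f (inv_s (Some u))))) has_field_derivative cnj D) (at 0)"
    using DERIV_cong_ev[OF refl ev2 refl] d2 by (simp add: o_def)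
  show ?thesis
    unfolding multiplier_def
    using DERIV_imp_deriv[OF d3] DERIV_imp_deriv[OF D] FF by simp
qed

lemma mult_phi:
  assumes c: "f \<circ> phi = phi \<circ> f" and fq: "f = rat_eval p q" and fz: "f \<zeta> = \<zeta>"
  shows "multiplier f (phi \<zeta>) = cnj (multiplier f \<zeta>)"
proof (cases \<zeta>)
  case None
  then show ?thesis using mult_zero[OF c fq] fz by simp
next
  case (Some z)
  show ?thesis
  proof (cases "z = 0")
    case True
    have "f None = None" using c fz Some True by (metis comp_apply phi.simps(1) phi_phi)
    then show ?thesis using mult_zero[OF c fq] Some True by simp
  next
    case False
    then show ?thesis using mult_generic[OF c fq _ False] fz Some by simp
  qed
qed

lemma hfd_cnj_within:
  assumes "(f has_field_derivative D) (at (cnj z) within cnj ` S)"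
  shows "((\<lambda>x. cnj (f (cnj x))) has_field_derivative cnj D) (at z within S)"
proof -
  have c1: "(cnj has_derivative cnj) (at z within S)"
    by (rule bounded_linear_imp_has_derivative[OF bounded_linear_cnj])
  have f1: "(f has_derivative (\<lambda>h. D * h)) (at (cnj z) within cnj ` S)"
    using assms unfolding has_field_derivative_def .
  have "((\<lambda>x. f (cnj x)) has_derivative (\<lambda>h. D * cnj h)) (at z within S)"
    by (rule has_derivative_in_compose[OF c1 f1])
  hence "((\<lambda>x. cnj (f (cnj x))) has_derivative (\<lambda>h. cnj (D * cnj h))) (at z within S)"
    by (rule has_derivative_cnj)
  moreover have "(\<lambda>h. cnj (D * cnj h)) = (\<lambda>h. cnj D * h)" by (simp add: fun_eq_iff)
  ultimately show ?thesis unfolding has_field_derivative_def by simp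
qed

lemma cnj_cnj_image[simp]: "cnj ` cnj ` T = T"
  by (simp add: image_image)

lemma hol_cnj:
  assumes "g holomorphic_on T"
  shows "(\<lambda>z. cnj (g (cnj z))) holomorphic_on (cnj ` T)"
  unfolding holomorphic_on_def
proof
  fix x assume "x \<in> cnj ` T"
  then obtain t where t: "t \<in> T" "x = cnj t" by auto
  then obtain D where "(g has_field_derivative D) (at t within T)"
    using assms unfolding holomorphic_on_def field_differentiable_def by blast
  hence "(g has_field_derivative D) (at (cnj x) within cnj ` cnj ` T)" using t by simp
  hence "((\<lambda>z. cnj (g (cnj z))) has_field_derivative cnj D) (at x within cnj ` T)"
    by (rule hfd_cnj_within)
  thus "(\<lambda>z. cnj (g (cnj z))) field_differentiable at x within cnj ` T"
    unfolding field_differentiable_def by blast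
qed

lemma hol_cnj_comp:
  assumes g: "g holomorphic_on T" and k: "k holomorphic_on S"
    and m: "\<And>z. z \<in> S \<Longrightarrow> cnj (k z) \<in> T"
    and e: "\<And>z. z \<in> S \<Longrightarrow> F z = cnj (g (cnj (k z)))"
  shows "F holomorphic_on S"
proof -
  have "(\<lambda>z. cnj (g (cnj z))) \<circ> k holomorphic_on S"
  proof (rule holomorphic_on_compose_gen[OF k hol_cnj[OF g]])
    show "k ` S \<subseteq> cnj ` T" using m by (auto simp: image_iff) (metis complex_cnj_cnj)
  qed
  thus ?thesis by (rule holomorphic_transform) (simp add: e)
qed

lemma phi_mem: "x \<in> phi ` U \<longleftrightarrow> phi x \<in> U"
  by (simp add: phi_image_eq)

lemma sph_hol_phi:
  assumes H: "sphere_holomorphic_on h \<Omega>"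
  shows "sphere_holomorphic_on (\<lambda>x. cnj (h (phi x))) (phi ` \<Omega>)"
proof -
  have HA: "(\<lambda>z. h (Some z)) holomorphic_on {z. Some z \<in> \<Omega>}"
    using H unfolding sphere_holomorphic_on_def by blast
  have HB: "None \<in> \<Omega> \<Longrightarrow> (\<lambda>w. h (inv_s (Some w))) holomorphic_on {w. inv_s (Some w) \<in> \<Omega>}"
    using H unfolding sphere_holomorphic_on_def by blast
  have p1: "phi (Some z) = inv_s (Some (- cnj z))" for z by simp
  have p2: "phi (inv_s (Some w)) = Some (- cnj w)" for w by simp
  have A: "(\<lambda>z. cnj (h (phi (Some z)))) holomorphic_on {z. Some z \<in> phi ` \<Omega>}"
  proof (cases "None \<in> \<Omega>")
    case True
    show ?thesis
    proof (rule hol_cnj_comp[OF HB[OF True], where k="\<lambda>z. - z"])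
      show "(\<lambda>z. - z) holomorphic_on {z. Some z \<in> phi ` \<Omega>}" by (auto intro!: holomorphic_intros)
      fix z assume "z \<in> {z. Some z \<in> phi ` \<Omega>}"
      hence "phi (Some z) \<in> \<Omega>" by (simp add: phi_mem)
      thus "cnj (- z) \<in> {w. inv_s (Some w) \<in> \<Omega>}" using p1[of z] by simp
      show "cnj (h (phi (Some z))) = cnj (h (inv_s (Some (cnj (- z)))))" using p1[of z] by simp
    qed
  next
    case False
    have nz: "z \<noteq> 0" if "z \<in> {z. Some z \<in> phi ` \<Omega>}" for z
      using that False by (auto simp: phi_mem)
    show ?thesis
    proof (rule hol_cnj_comp[OF HA, where k="\<lambda>z. -1 / z"])
      show "(\<lambda>z. -1 / z) holomorphic_on {z. Some z \<in> phi ` \<Omega>}"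
        using nz by (auto intro!: holomorphic_intros)
      fix z assume z: "z \<in> {z. Some z \<in> phi ` \<Omega>}"
      hence "phi (Some z) \<in> \<Omega>" by (simp add: phi_mem)
      thus "cnj (-1 / z) \<in> {z. Some z \<in> \<Omega>}" using nz[OF z] by simp
      show "cnj (h (phi (Some z))) = cnj (h (Some (cnj (-1 / z))))" using nz[OF z] by simp
    qed
  qed
  have B: "(\<lambda>w. cnj (h (phi (inv_s (Some w))))) holomorphic_on {w. inv_s (Some w) \<in> phi ` \<Omega>}"
  proof (rule hol_cnj_comp[OF HA, where k="\<lambda>z. - z"])
    show "(\<lambda>z. - z) holomorphic_on {w. inv_s (Some w) \<in> phi ` \<Omega>}" by (auto intro!: holomorphic_intros)
    fix w assume "w \<in> {w. inv_s (Some w) \<in> phi ` \<Omega>}"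
    hence "phi (inv_s (Some w)) \<in> \<Omega>" by (simp add: phi_mem)
    thus "cnj (- w) \<in> {z. Some z \<in> \<Omega>}" using p2[of w] by simp
    show "cnj (h (phi (inv_s (Some w)))) = cnj (h (Some (cnj (- w))))" using p2[of w] by simp
  qed
  show ?thesis unfolding sphere_holomorphic_on_def using A B by blast
qed

lemma cnj_image_sym: "(\<And>x. x \<in> A \<Longrightarrow> cnj x \<in> A) \<Longrightarrow> cnj ` A = A"
  by (auto simp: image_iff) (metis complex_cnj_cnj)

lemma exp_rot: "exp (2 * pi * \<i> * complex_of_real (- \<theta>)) = cnj (exp (2 * pi * \<i> * complex_of_real \<theta>))"
  by (simp add: exp_cnj)

lemma bij_phi:
  assumes b: "bij_betw h \<Omega> A" and A: "\<And>x. x \<in> A \<Longrightarrow> cnj x \<in> A"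
  shows "bij_betw (\<lambda>x. cnj (h (phi x))) (phi ` \<Omega>) A"
proof -
  have "bij_betw phi (phi ` \<Omega>) \<Omega>"
    by (rule bij_betw_imageI) (auto simp: inj_on_def image_image intro: inj_on_subset[OF inj_phi])
  moreover have "bij_betw cnj A A"
    by (rule bij_betw_imageI) (auto simp: inj_on_def cnj_image_sym[OF A])
  ultimately have "bij_betw (cnj \<circ> h \<circ> phi) (phi ` \<Omega>) A"
    using b by (metis bij_betw_trans)
  thus ?thesis by (simp add: o_def)
qed

lemma rot_phi:
  assumes c: "f \<circ> phi = phi \<circ> f"
    and R: "\<forall>z\<in>\<Omega>. h (f z) = exp (2 * pi * \<i> * complex_of_real \<theta>) * h z"
  shows "\<forall>z\<in>phi ` \<Omega>. cnj (h (phi (f z))) = exp (2 * pi * \<i> * complex_of_real (- \<theta>)) * cnj (h (phi z))"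
proof
  fix z assume "z \<in> phi ` \<Omega>"
  then obtain z0 where z0: "z0 \<in> \<Omega>" "z = phi z0" by auto
  have "phi (f z) = f z0" using z0 c by (metis comp_apply phi_phi)
  thus "cnj (h (phi (f z))) = exp (2 * pi * \<i> * complex_of_real (- \<theta>)) * cnj (h (phi z))"
    using R z0 by (simp only: exp_rot) simp
qed

lemma type_phi:
  assumes c: "f \<circ> phi = phi \<circ> f" and fq: "f = rat_eval p q" and T: "has_type f \<Omega> T"
  shows "has_type f (phi ` \<Omega>) T"
proof -
  have fphi: "f (phi x) = phi (f x)" for x using c by (metis comp_apply)
  show ?thesis
  proof (cases T)
    case Attracting
    then obtain \<zeta> where z: "\<zeta> \<in> \<Omega>" "f \<zeta> = \<zeta>" "0 < cmod (multiplier f \<zeta>)" "cmod (multiplier f \<zeta>) < 1"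
      using T by (auto simp: attracting_comp_def)
    show ?thesis unfolding Attracting has_type.simps attracting_comp_def
      using z mult_phi[OF c fq z(2)] fphi[of \<zeta>] by (intro bexI[of _ "phi \<zeta>"]) auto
  next
    case SuperAttracting
    then obtain \<zeta> where z: "\<zeta> \<in> \<Omega>" "f \<zeta> = \<zeta>" "multiplier f \<zeta> = 0"
      using T by (auto simp: superattracting_comp_def)
    show ?thesis unfolding SuperAttracting has_type.simps superattracting_comp_def
      using z mult_phi[OF c fq z(2)] fphi[of \<zeta>] by (intro bexI[of _ "phi \<zeta>"]) auto
  next
    case Parabolic
    then obtain \<zeta> m where z: "\<zeta> \<in> sphere_top closure_of \<Omega> - \<Omega>" "f \<zeta> = \<zeta>"
      "m \<ge> 1" "(multiplier f \<zeta>) ^ m = 1"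
      "\<forall>z\<in>\<Omega>. (\<lambda>n. sdist ((f ^^ n) z) \<zeta>) \<longlonglongrightarrow> 0"
      using T by (auto simp: parabolic_comp_def)
    have cl: "sphere_top closure_of (phi ` \<Omega>) = phi ` (sphere_top closure_of \<Omega>)"
      by (rule homeomorphic_map_closure_of[OF homeo_phi]) simp
    have "phi \<zeta> \<in> sphere_top closure_of (phi ` \<Omega>) - phi ` \<Omega>"
      using z(1) unfolding cl by (auto simp: phi_mem)
    moreover have "f (phi \<zeta>) = phi \<zeta>" using fphi z by simp
    moreover have "(multiplier f (phi \<zeta>)) ^ m = 1"
      using mult_phi[OF c fq z(2)] z(4) by (metis complex_cnj_one complex_cnj_power)
    moreover have "\<forall>z\<in>phi ` \<Omega>. (\<lambda>n. sdist ((f ^^ n) z) (phi \<zeta>)) \<longlonglongrightarrow> 0"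
      using z(5) by (auto simp: iter_phi[OF c])
    ultimately show ?thesis unfolding Parabolic has_type.simps parabolic_comp_def
      using z(3) by blast
  next
    case SiegelDisk
    then obtain h \<theta> where h: "irrational_rotation \<theta>" "sphere_holomorphic_on h \<Omega>"
      "bij_betw h \<Omega> (ball 0 1)" "\<forall>z\<in>\<Omega>. h (f z) = exp (2 * pi * \<i> * complex_of_real \<theta>) * h z"
      using T by (auto simp: siegel_disk_def)
    have "irrational_rotation (- \<theta>)" using h(1) by (simp add: irrational_rotation_def)
    moreover have "bij_betw (\<lambda>x. cnj (h (phi x))) (phi ` \<Omega>) (ball 0 1)"
      by (rule bij_phi[OF h(3)]) simp
    ultimately show ?thesis unfolding SiegelDisk has_type.simps siegel_disk_def
      using sph_hol_phi[OF h(2)] rot_phi[OF c h(4)] by blast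
  next
    case HermanRing
    then obtain h \<theta> r R where h: "0 < r" "r < R" "irrational_rotation \<theta>" "sphere_holomorphic_on h \<Omega>"
      "bij_betw h \<Omega> {w. r < cmod w \<and> cmod w < R}"
      "\<forall>z\<in>\<Omega>. h (f z) = exp (2 * pi * \<i> * complex_of_real \<theta>) * h z"
      using T by (auto simp: herman_ring_def)
    have "irrational_rotation (- \<theta>)" using h(3) by (simp add: irrational_rotation_def)
    moreover have "bij_betw (\<lambda>x. cnj (h (phi x))) (phi ` \<Omega>) {w. r < cmod w \<and> cmod w < R}"
      by (rule bij_phi[OF h(5)]) simp
    ultimately show ?thesis unfolding HermanRing has_type.simps herman_ring_def
      using h(1,2) sph_hol_phi[OF h(4)] rot_phi[OF c h(6)] by blast
  qed
qed

theorem mainTheorem2: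
  fixes f :: "csphere \<Rightarrow> csphere" and d :: nat and \<Omega> :: "csphere set"
  assumes "rational_map f d" and "d \<ge> 2"
    and "f \<circ> phi = phi \<circ> f"
    and "\<Omega> \<in> fatou_components f" and "f ` \<Omega> = \<Omega>"
  shows "phi ` \<Omega> \<in> fatou_components f \<and> f ` (phi ` \<Omega>) = phi ` \<Omega> \<and>
         (\<forall>T. has_type f (phi ` \<Omega>) T \<longleftrightarrow> has_type f \<Omega> T)"
proof -
  note c = assms(3)
  obtain p q where fq: "f = rat_eval p q" using assms(1) unfolding rational_map_def by blast
  have "f ` (phi ` \<Omega>) = (f \<circ> phi) ` \<Omega>" by (simp add: image_comp)
  also have "\<dots> = phi ` (f ` \<Omega>)" by (simp add: c image_comp)
  finally have inv: "f ` (phi ` \<Omega>) = phi ` \<Omega>" using assms(5) by simp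
  have pp: "phi ` phi ` \<Omega> = \<Omega>" by (simp add: image_image)
  have "has_type f (phi ` \<Omega>) T \<longleftrightarrow> has_type f \<Omega> T" for T
    using type_phi[OF c fq, of \<Omega> T] type_phi[OF c fq, of "phi ` \<Omega>" T] pp by auto
  thus ?thesis using components_phi[OF c assms(4)] inv by blast
qed

end
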